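(* Let $n\ge 2$ and let $u\in C^4$ be a $2$-convex solution of $\sigma_2(D^2u)=1$ on an open set in $\mathbb{R}^n$. At any point where $D^2u$ is diagonal with $u_{11}\ge u_{22}\ge\cdots\ge u_{nn}$, one has $$-\sum_{i\neq j}u_{ii1}u_{jj1}\ \ge\ \frac{2(n-1)\,u_{111}^2}{(n-1)u_{11}^2+2(n-2)}.$$
   Context: Subscripts denote partial derivatives, e.g. $u_{ij1}=\partial^3u/\partial x_i\partial x_j\partial x_1$. $\sigma_2(D^2u)$ is the second elementary symmetric function of the eigenvalues of $D^2u$. A function is $2$-convex if the eigenvalues $\lambda$ of its Hessian satisfy $\sigma_1(\lambda)>0$, $\sigma_2(\lambda)>0$ everywhere. *)

theory Defs
  imports "HOL-Analysis.Analysis" "HOL-Library.Numeral_Type"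
begin

definition pd :: "'n::finite \<Rightarrow> (real^'n \<Rightarrow> real) \<Rightarrow> real^'n \<Rightarrow> real" where
  "pd i f x = frechet_derivative f (at x) (axis i 1)"

fun Ck :: "nat \<Rightarrow> (real^'n::finite) set \<Rightarrow> (real^'n \<Rightarrow> real) \<Rightarrow> bool" where
  "Ck 0 S f = continuous_on S f"
| "Ck (Suc k) S f = (f differentiable_on S \<and> (\<forall>i. Ck k S (pd i f)))"

definition hess :: "(real^'n::finite \<Rightarrow> real) \<Rightarrow> real^'n \<Rightarrow> real^'n^'n" where
  "hess u x = (\<chi> i j. pd j (pd i u) x)"

text \<open>Elementary symmetric functions of the eigenvalues of a (symmetric) matrix,
  written as sums of principal minors: sigma_1 = trace, sigma_2 = sum of 2x2 principal minors.\<close>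
definition sigma1 :: "real^'n^'n \<Rightarrow> real" where
  "sigma1 A = (\<Sum>i\<in>UNIV. A $ i $ i)"

definition sigma2 :: "real^('n::{finite,linorder})^('n::{finite,linorder}) \<Rightarrow> real" where
  "sigma2 A = (\<Sum>i\<in>UNIV. \<Sum>j\<in>{j. i < j}. A $ i $ i * A $ j $ j - A $ i $ j * A $ j $ i)"

definition two_convex_on :: "(real^('n::{finite,linorder})) set \<Rightarrow> (real^('n::{finite,linorder}) \<Rightarrow> real) \<Rightarrow> bool" where
  "two_convex_on S u = (\<forall>x\<in>S. sigma1 (hess u x) > 0 \<and> sigma2 (hess u x) > 0)"

end

theory Submission
  imports Defs
begin

lemma key:
  fixes e e1 l a :: "'a::real_inner"
  assumes ee: "e \<bullet> e = N" and ee1: "e \<bullet> e1 = 1" and e1e1: "e1 \<bullet> e1 = 1" and N2: "N \<ge> 2"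
    and ll: "(e \<bullet> l)^2 - l \<bullet> l = 2" and la: "(e \<bullet> l) * (e \<bullet> a) - l \<bullet> a = 0"
    and sp: "e \<bullet> l > 0" and l1: "l \<bullet> e1 = l1" and a1: "a \<bullet> e1 = a1" and l1p: "l1 > 0"
  shows "a \<bullet> a - (e \<bullet> a)^2 \<ge> 2*(N-1)*a1^2/((N-1)*l1^2 + 2*(N-2))"
proof -
  define B where "B u v = (e \<bullet> u)*(e \<bullet> v) - u \<bullet> v" for u v
  have Bsym: "B u v = B v u" for u v by (simp add: B_def inner_commute mult.commute)
  have Bexp: "B (u - t *\<^sub>R v) (u - t *\<^sub>R v) = B u u - 2*t*B u v + t^2 * B v v" for u v t
    by (simp add: B_def inner_diff_left inner_diff_right inner_commute power2_eq_square algebra_simps)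
  have Bl: "B l l = 2" using ll by (simp add: B_def power2_eq_square)
  have L: "B z z \<le> 0" if hz: "B l z = 0" for z
  proof -
    define w where "w = (e \<bullet> z) *\<^sub>R l - (e \<bullet> l) *\<^sub>R z"
    have ew: "e \<bullet> w = 0" by (simp add: w_def inner_diff_right)
    have "B w w = - (w \<bullet> w)" by (simp add: B_def ew)
    also have "\<dots> \<le> 0" by simp
    finally have "B w w \<le> 0" .
    moreover have "B w w = (e \<bullet> z)^2 * B l l - 2*(e \<bullet> z)*(e \<bullet> l)*B l z + (e \<bullet> l)^2 * B z z"
      unfolding w_def
      by (simp add: B_def inner_diff_left inner_diff_right inner_commute power2_eq_square algebra_simps)
    ultimately have "2*(e \<bullet> z)^2 + (e \<bullet> l)^2 * B z z \<le> 0" using hz Bl by simp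
    hence "(e \<bullet> l)^2 * B z z \<le> 0" using zero_le_power2[of "e \<bullet> z"] by linarith
    moreover have "(e \<bullet> l)^2 > 0" using sp by simp
    ultimately show ?thesis by (simp add: mult_le_0_iff)
  qed
  define K where "K = (N-2)/(N-1) + l1^2/2"
  have N1: "N - 1 > 0" using N2 by simp
  have Kp: "K > 0" unfolding K_def using N2 l1p by (simp add: add_nonneg_pos)
  define y where "y = (1/(N-1)) *\<^sub>R e - e1 - (l1/2) *\<^sub>R l"
  have Bye: "B e v = (N-1) * (e \<bullet> v)" for v using ee by (simp add: B_def algebra_simps)
  have Bye1: "B e1 v = (e \<bullet> v) - e1 \<bullet> v" for v using ee1 by (simp add: B_def)
  have Byv: "B y v = e1 \<bullet> v - (l1/2) * B l v" for v
  proof -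
    have "B y v = (1/(N-1)) * B e v - B e1 v - (l1/2) * B l v"
      unfolding y_def B_def by (simp add: inner_diff_left inner_scaleR_left algebra_simps)
    also have "\<dots> = e1 \<bullet> v - (l1/2) * B l v" using N1 by (simp add: Bye Bye1)
    finally show ?thesis .
  qed
  have Bla: "B l a = 0" using la by (simp add: B_def)
  have Bya: "B y a = a1" using Byv[of a] Bla a1 by (simp add: inner_commute)
  have Byl: "B l y = 0" using Byv[of l] Bl l1 Bsym by (simp add: inner_commute)
  have "e1 \<bullet> y = 1/(N-1) - 1 - (l1/2)*l1" unfolding y_def
    using ee1 e1e1 l1 by (simp add: inner_diff_right inner_commute)
  hence Byy: "B y y = -K" using Byv[of y] Byl unfolding K_def using N1 by (simp add: field_simps power2_eq_square)
  define t where "t = -a1/K"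
  have "B l (a - t *\<^sub>R y) = 0" using Bla Byl
    by (simp add: B_def inner_diff_right algebra_simps)
  hence "B (a - t *\<^sub>R y) (a - t *\<^sub>R y) \<le> 0" by (rule L)
  hence "B a a - 2*t*a1 + t^2*(-K) \<le> 0" using Bexp Bya Bsym Byy by metis
  moreover have "B a a - 2*t*a1 + t^2*(-K) = B a a + a1^2/K" unfolding t_def using Kp
    by (simp add: field_simps power2_eq_square)
  ultimately have "B a a + a1^2/K \<le> 0" by linarith
  hence "a \<bullet> a - (e \<bullet> a)^2 \<ge> a1^2/K" by (simp add: B_def power2_eq_square)
  moreover have "a1^2/K = 2*(N-1)*a1^2/((N-1)*l1^2 + 2*(N-2))"
    unfolding K_def using N1 by (simp add: field_simps)
  ultimately show ?thesis by simp
qed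

lemma S1:
  fixes h :: "'n::{finite,linorder} \<Rightarrow> 'n \<Rightarrow> real"
  shows "(\<Sum>i\<in>UNIV. \<Sum>j\<in>{j. i < j}. h i j + h j i) = (\<Sum>i\<in>UNIV. \<Sum>j\<in>UNIV - {i}. h i j)"
proof -
  have sw: "(\<Sum>i\<in>UNIV. \<Sum>j\<in>{j. i < j}. h j i) = (\<Sum>j\<in>UNIV. \<Sum>i\<in>{i. i < j}. h j i)"
    using sum.swap_restrict[of "UNIV::'n set" "UNIV::'n set" "\<lambda>i j. h j i" "\<lambda>i j. i < j"] by simp
  have "(\<Sum>i\<in>UNIV. \<Sum>j\<in>{j. i < j}. h i j + h j i)
      = (\<Sum>i\<in>UNIV. \<Sum>j\<in>{j. i < j}. h i j) + (\<Sum>i\<in>UNIV. \<Sum>j\<in>{j. j < i}. h i j)"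
    by (simp add: sum.distrib sw)
  also have "\<dots> = (\<Sum>i\<in>UNIV. (\<Sum>j\<in>{j. i < j}. h i j) + (\<Sum>j\<in>{j. j < i}. h i j))"
    by (simp add: sum.distrib)
  also have "\<dots> = (\<Sum>i\<in>UNIV. \<Sum>j\<in>UNIV - {i}. h i j)"
  proof (rule sum.cong[OF refl])
    fix i :: 'n
    have "UNIV - {i} = {j. i < j} \<union> {j. j < i}" by auto
    moreover have "{j. i < j} \<inter> {j. j < i} = {}" by auto
    ultimately show "(\<Sum>j\<in>{j. i < j}. h i j) + (\<Sum>j\<in>{j. j < i}. h i j) = (\<Sum>j\<in>UNIV - {i}. h i j)"
      by (simp add: sum.union_disjoint)
  qed
  finally show ?thesis .
qed

lemma S2:
  fixes c d :: "'n::finite \<Rightarrow> real"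
  shows "(\<Sum>i\<in>UNIV. \<Sum>j\<in>UNIV - {i}. c i * d j) = (\<Sum>i\<in>UNIV. c i) * (\<Sum>j\<in>UNIV. d j) - (\<Sum>i\<in>UNIV. c i * d i)"
proof -
  have "(\<Sum>i\<in>UNIV. \<Sum>j\<in>UNIV - {i}. c i * d j) = (\<Sum>i\<in>UNIV. c i * (\<Sum>j\<in>UNIV. d j) - c i * d i)"
    by (intro sum.cong refl) (simp add: sum_distrib_left[symmetric] sum_diff1 algebra_simps)
  thus ?thesis by (simp add: sum_subtractf sum_distrib_right)
qed

theorem corollary2p1:
  fixes u :: "real^'n::{finite,wellorder} \<Rightarrow> real"
    and \<Omega> :: "(real^('n::{finite,wellorder})) set"
    and x :: "real^('n::{finite,wellorder})"
    and i1 :: "'n::{finite,wellorder}"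
  assumes n2: "CARD('n) \<ge> 2"
    and open_dom: "open \<Omega>"
    and C4: "Ck 4 \<Omega> u"
    and conv: "two_convex_on \<Omega> u"
    and eqn: "\<forall>y\<in>\<Omega>. sigma2 (hess u y) = 1"
    and xin: "x \<in> \<Omega>"
    and diag: "\<forall>i j. i \<noteq> j \<longrightarrow> hess u x $ i $ j = 0"
    and ordered: "\<forall>i j. i \<le> j \<longrightarrow> hess u x $ j $ j \<le> hess u x $ i $ i"
    and first: "\<forall>j. i1 \<le> j"
  shows "- (\<Sum>i\<in>UNIV. \<Sum>j\<in>UNIV - {i}. pd i1 (pd i (pd i u)) x * pd i1 (pd j (pd j u)) x)
           \<ge> 2 * (real CARD('n) - 1) * (pd i1 (pd i1 (pd i1 u)) x)^2
             / ((real CARD('n) - 1) * (hess u x $ i1 $ i1)^2 + 2 * (real CARD('n) - 2))"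
proof -
  define G where "G i j = pd j (pd i u)" for i j
  define D where "D i j = frechet_derivative (G i j) (at x)" for i j
  define lam where "lam i = hess u x $ i $ i" for i
  define av where "av i = pd i1 (pd i (pd i u)) x" for i
  have hG: "hess u y $ i $ j = G i j y" for y i j by (simp add: hess_def G_def)
  have difon: "G i j differentiable_on \<Omega>" for i j
    using C4 by (simp add: G_def eval_nat_numeral)
  have dG: "(G i j has_derivative D i j) (at x)" for i j
    using difon[of i j] open_dom xin
    by (simp add: differentiable_on_eq_differentiable_at D_def frechet_derivative_works[symmetric])
  define F where "F y = (\<Sum>i\<in>UNIV. \<Sum>j\<in>{j. i < j}. G i i y * G j j y - G i j y * G j i y)" for y
  have Fs: "sigma2 (hess u y) = F y" for y by (simp add: sigma2_def F_def hG)
  have dF: "(F has_derivative (\<lambda>h. \<Sum>i\<in>UNIV. \<Sum>j\<in>{j. i < j}.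
      (G i i x * D j j h + D i i h * G j j x) - (G i j x * D j i h + D i j h * G j i x))) (at x)"
    unfolding F_def by (intro has_derivative_sum has_derivative_diff has_derivative_mult dG)
  have dF0: "(F has_derivative (\<lambda>h. 0)) (at x)"
    by (rule has_derivative_transform_within_open[OF has_derivative_const open_dom xin])
       (use eqn Fs in auto)
  have "(\<lambda>h. \<Sum>i\<in>UNIV. \<Sum>j\<in>{j. i < j}.
      (G i i x * D j j h + D i i h * G j j x) - (G i j x * D j i h + D i j h * G j i x)) = (\<lambda>h. 0)"
    using has_derivative_unique[OF dF dF0] .
  from fun_cong[OF this, of "axis i1 1"]
  have d0: "(\<Sum>i\<in>UNIV. \<Sum>j\<in>{j. i < j}. lam i * av j + av i * lam j) = 0"
  proof -
    assume h: "(\<Sum>i\<in>UNIV. \<Sum>j\<in>{j. i < j}.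
      (G i i x * D j j (axis i1 1) + D i i (axis i1 1) * G j j x) - (G i j x * D j i (axis i1 1) + D i j (axis i1 1) * G j i x)) = 0"
    have "(\<Sum>i\<in>UNIV. \<Sum>j\<in>{j. i < j}.
      (G i i x * D j j (axis i1 1) + D i i (axis i1 1) * G j j x) - (G i j x * D j i (axis i1 1) + D i j (axis i1 1) * G j i x))
      = (\<Sum>i\<in>UNIV. \<Sum>j\<in>{j. i < j}. lam i * av j + av i * lam j)"
    proof (intro sum.cong refl)
      fix i j :: 'n assume "j \<in> {j. i < j}"
      hence "i \<noteq> j" by simp
      hence "G i j x = 0" "G j i x = 0" using diag hG by metis+
      thus "(G i i x * D j j (axis i1 1) + D i i (axis i1 1) * G j j x) - (G i j x * D j i (axis i1 1) + D i j (axis i1 1) * G j i x)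
         = lam i * av j + av i * lam j"
        by (simp add: lam_def av_def hG D_def pd_def G_def)
    qed
    thus ?thesis using h by simp
  qed
  have s2x: "(\<Sum>i\<in>UNIV. \<Sum>j\<in>{j. i < j}. lam i * lam j) = 1"
  proof -
    have "sigma2 (hess u x) = (\<Sum>i\<in>UNIV. \<Sum>j\<in>{j. i < j}. lam i * lam j)"
      unfolding sigma2_def lam_def using diag by (intro sum.cong refl) auto
    thus ?thesis using eqn xin by simp
  qed
  define e :: "real^('n::{finite,wellorder})" where "e = (\<chi> i. 1)"
  define lv :: "real^('n::{finite,wellorder})" where "lv = (\<chi> i. lam i)"
  define aw :: "real^('n::{finite,wellorder})" where "aw = (\<chi> i. av i)"
  define e1 :: "real^('n::{finite,wellorder})" where "e1 = axis i1 1"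
  have ev: "e \<bullet> v = (\<Sum>i\<in>UNIV. v $ i)" for v by (simp add: e_def inner_vec_def)
  have ee: "e \<bullet> e = real CARD('n)" by (simp add: e_def inner_vec_def)
  have ee1: "e \<bullet> e1 = 1" by (simp add: e1_def inner_axis e_def)
  have e1e1: "e1 \<bullet> e1 = 1" by (simp add: e1_def inner_axis)
  have N2: "real CARD('n) \<ge> 2" using n2 by simp
  have ll: "(e \<bullet> lv)^2 - lv \<bullet> lv = 2"
  proof -
    have "(\<Sum>i\<in>UNIV. \<Sum>j\<in>UNIV - {i}. lam i * lam j) = 2"
      using S1[of "\<lambda>i j. lam i * lam j"] s2x by (simp add: mult.commute sum_distrib_left[symmetric])
    thus ?thesis using S2[of lam lam] by (simp add: e_def lv_def inner_vec_def power2_eq_square)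
  qed
  have la: "(e \<bullet> lv) * (e \<bullet> aw) - lv \<bullet> aw = 0"
  proof -
    have "(\<Sum>i\<in>UNIV. \<Sum>j\<in>UNIV - {i}. lam i * av j) = 0"
      using S1[of "\<lambda>i j. lam i * av j"] d0 by (simp add: mult.commute)
    thus ?thesis using S2[of lam av] by (simp add: e_def lv_def aw_def inner_vec_def)
  qed
  have sp: "e \<bullet> lv > 0" using conv xin by (simp add: two_convex_on_def sigma1_def ev lv_def lam_def)
  have l1: "lv \<bullet> e1 = lam i1" by (simp add: e1_def inner_axis lv_def)
  have a1: "aw \<bullet> e1 = av i1" by (simp add: e1_def inner_axis aw_def)
  have l1p: "lam i1 > 0"
  proof -
    have "(\<Sum>i\<in>UNIV. lam i) \<le> (\<Sum>i\<in>(UNIV::'n set). lam i1)"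
      by (intro sum_mono) (use ordered first in \<open>simp add: lam_def\<close>)
    hence "e \<bullet> lv \<le> real CARD('n) * lam i1" by (simp add: ev lv_def)
    thus ?thesis using sp by (smt (verit) mult_nonneg_nonpos of_nat_0_le_iff)
  qed
  have K: "aw \<bullet> aw - (e \<bullet> aw)^2 \<ge> 2*(real CARD('n)-1)*(av i1)^2/((real CARD('n)-1)*(lam i1)^2 + 2*(real CARD('n)-2))"
    by (rule key[OF ee ee1 e1e1 N2 ll la sp l1 a1 l1p])
  have "- (\<Sum>i\<in>UNIV. \<Sum>j\<in>UNIV - {i}. av i * av j) = aw \<bullet> aw - (e \<bullet> aw)^2"
    using S2[of av av] by (simp add: e_def aw_def inner_vec_def power2_eq_square)
  moreover have "pd i1 (pd i1 (pd i1 u)) x = av i1" by (simp add: av_def)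
  moreover have "hess u x $ i1 $ i1 = lam i1" by (simp add: lam_def)
  ultimately show ?thesis using K by (simp add: av_def)
qed

end
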